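(* Let $(a,b,c,\lambda)\in(\mathbb F^\times)^4$ and $(\mu,\varphi,\omega^*,\omega^\varepsilon)\in\mathbb F^\times\times\mathbb F^3$. Suppose a $\triangle_q$-module $V$ contains a nonzero vector $v$ with $Bv=(\mu+\mu^{-1})v$, $(B-\mu q^2-\mu^{-1}q^{-2})Av=(q-q^{-1})\varphi v$, $\beta v=\omega^*v$ and $\gamma v=\omega^\varepsilon v$. Then $(a,b,c,\lambda)$ is feasible for $(\mu,\varphi,\omega^*,\omega^\varepsilon)$ if and only if both (i) $\mu=b\lambda^{-1}$ and (ii) there exists a $\triangle_q$-module homomorphism $M_\lambda(a,b,c)\to V$ sending $m_0$ to $v$.
   Context: $\mathbb F$ is an algebraically closed field and $q\in\mathbb F^\times$ is a root of unity of order $d\notin\{1,2,4\}$. $\triangle_q$ is the unital associative $\mathbb F$-algebra with generators $A,B,C$ subject to: each of $A+\frac{qBC-q^{-1}CB}{q^2-q^{-2}}$, $B+\frac{qCA-q^{-1}AC}{q^2-q^{-2}}$, $C+\frac{qAB-q^{-1}BA}{q^2-q^{-2}}$ is central; $\alpha,\beta,\gamma$ denote these multiplied by $q+q^{-1}$. For $(a,b,c,\lambda)\in(\mathbb F^\times)^4$, $i\in\mathbb N$: $\theta_i=a\lambda^{-1}q^{2i}+a^{-1}\lambda q^{-2i}$, $\theta_i^*=b\lambda^{-1}q^{2i}+b^{-1}\lambda q^{-2i}$, $\varphi_i=a^{-1}b^{-1}\lambda q(q^i-q^{-i})(\lambda^{-1}q^{i-1}-\lambda q^{1-i})(q^{-i}-abc\lambda^{-1}q^{i-1})(q^{-i}-abc^{-1}\lambda^{-1}q^{i-1})$.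 $M_\lambda(a,b,c)$ is the $\triangle_q$-module with basis $\{m_i\}_{i\in\mathbb N}$ with $(A-\theta_i)m_i=m_{i+1}$, $(B-\theta_i^* )m_i=\varphi_im_{i-1}$, and $\alpha,\beta,\gamma$ acting as $(b+b^{-1})(c+c^{-1})+(a+a^{-1})(\lambda q+\lambda^{-1}q^{-1})$, $(c+c^{-1})(a+a^{-1})+(b+b^{-1})(\lambda q+\lambda^{-1}q^{-1})$, $(a+a^{-1})(b+b^{-1})+(c+c^{-1})(\lambda q+\lambda^{-1}q^{-1})$. $(a,b,c,\lambda)$ is called feasible for $(\mu,\varphi,\omega^*,\omega^\varepsilon)$ if $\mu=b\lambda^{-1}$, $\varphi=(c+c^{-1})(\lambda-\lambda^{-1})-(a+a^{-1})(bq-b^{-1}q^{-1})$, $\omega^*=(c+c^{-1})(a+a^{-1})+(b+b^{-1})(\lambda q+\lambda^{-1}q^{-1})$, and $\omega^\varepsilon=(a+a^{-1})(b+b^{-1})+(c+c^{-1})(\lambda q+\lambda^{-1}q^{-1})$. *)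

theory Defs
  imports "HOL-Computational_Algebra.Polynomial" "HOL-Library.Poly_Mapping"
begin

definition root_of_unity_order :: "'a::field \<Rightarrow> nat \<Rightarrow> bool" where
  "root_of_unity_order q d \<longleftrightarrow> 0 < d \<and> q ^ d = 1 \<and> (\<forall>k. 0 < k \<and> k < d \<longrightarrow> q ^ k \<noteq> 1)"

(* The operators alpha, beta, gamma of triangle_q (the central elements times q + q^-1),
   computed from the actions of the generators A, B, C with scalar multiplication sc *)
definition tri_alpha :: "'a::field \<Rightarrow> ('a \<Rightarrow> 'v::ab_group_add \<Rightarrow> 'v) \<Rightarrow> ('v \<Rightarrow> 'v) \<Rightarrow> ('v \<Rightarrow> 'v) \<Rightarrow> ('v \<Rightarrow> 'v) \<Rightarrow> 'v \<Rightarrow> 'v" where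
  "tri_alpha q sc A B C x = sc (q + inverse q)
     (A x + sc (inverse (q^2 - inverse q ^ 2)) (sc q (B (C x)) - sc (inverse q) (C (B x))))"

definition tri_beta :: "'a::field \<Rightarrow> ('a \<Rightarrow> 'v::ab_group_add \<Rightarrow> 'v) \<Rightarrow> ('v \<Rightarrow> 'v) \<Rightarrow> ('v \<Rightarrow> 'v) \<Rightarrow> ('v \<Rightarrow> 'v) \<Rightarrow> 'v \<Rightarrow> 'v" where
  "tri_beta q sc A B C x = sc (q + inverse q)
     (B x + sc (inverse (q^2 - inverse q ^ 2)) (sc q (C (A x)) - sc (inverse q) (A (C x))))"

definition tri_gamma :: "'a::field \<Rightarrow> ('a \<Rightarrow> 'v::ab_group_add \<Rightarrow> 'v) \<Rightarrow> ('v \<Rightarrow> 'v) \<Rightarrow> ('v \<Rightarrow> 'v) \<Rightarrow> ('v \<Rightarrow> 'v) \<Rightarrow> 'v \<Rightarrow> 'v" where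
  "tri_gamma q sc A B C x = sc (q + inverse q)
     (C x + sc (inverse (q^2 - inverse q ^ 2)) (sc q (A (B x)) - sc (inverse q) (B (A x))))"

definition tri_module :: "'a::field \<Rightarrow> ('a \<Rightarrow> 'v::ab_group_add \<Rightarrow> 'v) \<Rightarrow> ('v \<Rightarrow> 'v) \<Rightarrow> ('v \<Rightarrow> 'v) \<Rightarrow> ('v \<Rightarrow> 'v) \<Rightarrow> bool" where
  "tri_module q sc A B C \<longleftrightarrow>
     Vector_Spaces.vector_space sc \<and>
     Vector_Spaces.linear sc sc A \<and> Vector_Spaces.linear sc sc B \<and> Vector_Spaces.linear sc sc C \<and>
     (\<forall>Z \<in> {tri_alpha q sc A B C, tri_beta q sc A B C, tri_gamma q sc A B C}.
        \<forall>X \<in> {A, B, C}. \<forall>x. Z (X x) = X (Z x))"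

definition thetaM :: "'a::field \<Rightarrow> 'a \<Rightarrow> 'a \<Rightarrow> nat \<Rightarrow> 'a" where
  "thetaM q a lam i = a * inverse lam * q ^ (2*i) + inverse a * lam * inverse q ^ (2*i)"

definition thetaM_s :: "'a::field \<Rightarrow> 'a \<Rightarrow> 'a \<Rightarrow> nat \<Rightarrow> 'a" where
  "thetaM_s q b lam i = b * inverse lam * q ^ (2*i) + inverse b * lam * inverse q ^ (2*i)"

definition phiM :: "'a::field \<Rightarrow> 'a \<Rightarrow> 'a \<Rightarrow> 'a \<Rightarrow> 'a \<Rightarrow> nat \<Rightarrow> 'a" where
  "phiM q a b c lam i = inverse a * inverse b * lam * q * (q ^ i - inverse q ^ i)
     * (inverse lam * q ^ i * inverse q - lam * q * inverse q ^ i)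
     * (inverse q ^ i - a * b * c * inverse lam * q ^ i * inverse q)
     * (inverse q ^ i - a * b * inverse c * inverse lam * q ^ i * inverse q)"

(* M_lambda(a,b,c) is modelled as the finitely supported sequences nat \<Rightarrow>\<^sub>0 F,
   with basis m_i = Poly_Mapping.single i 1 *)
definition Msc :: "'a::field \<Rightarrow> (nat \<Rightarrow>\<^sub>0 'a) \<Rightarrow> (nat \<Rightarrow>\<^sub>0 'a)" where
  "Msc t x = Poly_Mapping.map (\<lambda>y. t * y) x"

definition MA :: "'a::field \<Rightarrow> 'a \<Rightarrow> 'a \<Rightarrow> (nat \<Rightarrow>\<^sub>0 'a) \<Rightarrow> (nat \<Rightarrow>\<^sub>0 'a)" where
  "MA q a lam x = (\<Sum>i\<in>Poly_Mapping.keys x. Poly_Mapping.single i (Poly_Mapping.lookup x i * thetaM q a lam i)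
                                 + Poly_Mapping.single (Suc i) (Poly_Mapping.lookup x i))"

definition MB :: "'a::field \<Rightarrow> 'a \<Rightarrow> 'a \<Rightarrow> 'a \<Rightarrow> 'a \<Rightarrow> (nat \<Rightarrow>\<^sub>0 'a) \<Rightarrow> (nat \<Rightarrow>\<^sub>0 'a)" where
  "MB q a b c lam x = (\<Sum>i\<in>Poly_Mapping.keys x. Poly_Mapping.single i (Poly_Mapping.lookup x i * thetaM_s q b lam i)
       + (if i = 0 then 0 else Poly_Mapping.single (i - 1) (Poly_Mapping.lookup x i * phiM q a b c lam i)))"

(* scalar by which gamma acts on M_lambda(a,b,c) *)
definition gammaM :: "'a::field \<Rightarrow> 'a \<Rightarrow> 'a \<Rightarrow> 'a \<Rightarrow> 'a \<Rightarrow> 'a" where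
  "gammaM q a b c lam = (a + inverse a) * (b + inverse b) + (c + inverse c) * (lam * q + inverse lam * inverse q)"

(* the action of C on M_lambda(a,b,c), determined by gamma = (q+q^-1) C + (qAB - q^-1 BA)/(q - q^-1) *)
definition MC :: "'a::field \<Rightarrow> 'a \<Rightarrow> 'a \<Rightarrow> 'a \<Rightarrow> 'a \<Rightarrow> (nat \<Rightarrow>\<^sub>0 'a) \<Rightarrow> (nat \<Rightarrow>\<^sub>0 'a)" where
  "MC q a b c lam x = Msc (inverse (q + inverse q))
     (Msc (gammaM q a b c lam) x
      - Msc (inverse (q - inverse q))
          (Msc q (MA q a lam (MB q a b c lam x)) - Msc (inverse q) (MB q a b c lam (MA q a lam x))))"

definition M_hom :: "'a::field \<Rightarrow> 'a \<Rightarrow> 'a \<Rightarrow> 'a \<Rightarrow> 'a \<Rightarrow> ('a \<Rightarrow> 'v::ab_group_add \<Rightarrow> 'v)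
    \<Rightarrow> ('v \<Rightarrow> 'v) \<Rightarrow> ('v \<Rightarrow> 'v) \<Rightarrow> ('v \<Rightarrow> 'v) \<Rightarrow> ((nat \<Rightarrow>\<^sub>0 'a) \<Rightarrow> 'v) \<Rightarrow> bool" where
  "M_hom q a b c lam sc A B C f \<longleftrightarrow>
     Vector_Spaces.linear Msc sc f \<and>
     (\<forall>x. f (MA q a lam x) = A (f x)) \<and>
     (\<forall>x. f (MB q a b c lam x) = B (f x)) \<and>
     (\<forall>x. f (MC q a b c lam x) = C (f x))"

definition feasible :: "'a::field \<Rightarrow> 'a \<Rightarrow> 'a \<Rightarrow> 'a \<Rightarrow> 'a \<Rightarrow> 'a \<Rightarrow> 'a \<Rightarrow> 'a \<Rightarrow> 'a \<Rightarrow> bool" where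
  "feasible q a b c lam mu ph ws we \<longleftrightarrow>
     mu = b * inverse lam \<and>
     ph = (c + inverse c) * (lam - inverse lam) - (a + inverse a) * (b * q - inverse b * inverse q) \<and>
     ws = (c + inverse c) * (a + inverse a) + (b + inverse b) * (lam * q + inverse lam * inverse q) \<and>
     we = (a + inverse a) * (b + inverse b) + (c + inverse c) * (lam * q + inverse lam * inverse q)"

end

theory Submission
  imports Defs
begin

definition lc5 :: "('a \<Rightarrow> 'v \<Rightarrow> 'v) \<Rightarrow> 'a\<Rightarrow>'a\<Rightarrow>'a\<Rightarrow>'a\<Rightarrow>'a \<Rightarrow> 'v\<Rightarrow>'v\<Rightarrow>'v\<Rightarrow>'v\<Rightarrow>'v \<Rightarrow> 'v::ab_group_add" where
"lc5 s c0 c1 c2 c3 c4 x0 x1 x2 x3 x4 = s c0 x0 + s c1 x1 + s c2 x2 + s c3 x3 + s c4 x4"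

lemma lc5_cong: "c0=d0 \<Longrightarrow> c1=d1 \<Longrightarrow> c2=d2 \<Longrightarrow> c3=d3 \<Longrightarrow> c4=d4 \<Longrightarrow>
  lc5 s c0 c1 c2 c3 c4 x0 x1 x2 x3 x4 = lc5 s d0 d1 d2 d3 d4 x0 x1 x2 x3 x4" by simp

lemma lin_add: "Vector_Spaces.linear s s f \<Longrightarrow> f (x + y) = f x + f y"
  by (metis module_hom.add module_hom_iff_linear)
lemma lin_scale: "Vector_Spaces.linear s s f \<Longrightarrow> f (s c x) = s c (f x)"
  by (metis module_hom.scale module_hom_iff_linear)
lemma lin_diff: "Vector_Spaces.linear s s f \<Longrightarrow> f (x - y) = f x - f y"
  by (metis module_hom.diff module_hom_iff_linear)
lemma lin_zero: "Vector_Spaces.linear s s f \<Longrightarrow> f 0 = 0"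
  by (metis module_hom.zero module_hom_iff_linear)

context vector_space begin

lemma lc5_add: "lc5 scale c0 c1 c2 c3 c4 x0 x1 x2 x3 x4 + lc5 scale d0 d1 d2 d3 d4 x0 x1 x2 x3 x4
  = lc5 scale (c0+d0) (c1+d1) (c2+d2) (c3+d3) (c4+d4) x0 x1 x2 x3 x4"
  by (simp add: lc5_def scale_left_distrib algebra_simps)
lemma lc5_diff: "lc5 scale c0 c1 c2 c3 c4 x0 x1 x2 x3 x4 - lc5 scale d0 d1 d2 d3 d4 x0 x1 x2 x3 x4
  = lc5 scale (c0-d0) (c1-d1) (c2-d2) (c3-d3) (c4-d4) x0 x1 x2 x3 x4"
  by (simp add: lc5_def scale_left_diff_distrib algebra_simps)
lemma lc5_scale: "c *s lc5 scale c0 c1 c2 c3 c4 x0 x1 x2 x3 x4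
  = lc5 scale (c*c0) (c*c1) (c*c2) (c*c3) (c*c4) x0 x1 x2 x3 x4"
  by (simp add: lc5_def scale_right_distrib)
lemma lc5_zero: "(0::'b) = lc5 scale 0 0 0 0 0 x0 x1 x2 x3 x4"
  by (simp add: lc5_def)
lemma lc5_comb: "lc5 scale c0 c1 c2 c3 c4 x0 x1 x2 x3 x4 = lc5 scale d0 d1 d2 d3 d4 x0 x1 x2 x3 x4 \<Longrightarrow>
  e0 - f0 = c0 - d0 \<Longrightarrow> e1 - f1 = c1 - d1 \<Longrightarrow> e2 - f2 = c2 - d2 \<Longrightarrow> e3 - f3 = c3 - d3 \<Longrightarrow> e4 - f4 = c4 - d4 \<Longrightarrow>
  lc5 scale e0 e1 e2 e3 e4 x0 x1 x2 x3 x4 = lc5 scale f0 f1 f2 f3 f4 x0 x1 x2 x3 x4"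
proof -
  assume h: "lc5 scale c0 c1 c2 c3 c4 x0 x1 x2 x3 x4 = lc5 scale d0 d1 d2 d3 d4 x0 x1 x2 x3 x4"
    and e: "e0 - f0 = c0 - d0" "e1 - f1 = c1 - d1" "e2 - f2 = c2 - d2" "e3 - f3 = c3 - d3" "e4 - f4 = c4 - d4"
  have "lc5 scale e0 e1 e2 e3 e4 x0 x1 x2 x3 x4 - lc5 scale f0 f1 f2 f3 f4 x0 x1 x2 x3 x4
     = lc5 scale c0 c1 c2 c3 c4 x0 x1 x2 x3 x4 - lc5 scale d0 d1 d2 d3 d4 x0 x1 x2 x3 x4"
    by (simp only: lc5_diff e)
  also have "\<dots> = 0" using h by simp
  finally show ?thesis by simp
qed

lemma step:
  fixes A B :: "'b \<Rightarrow> 'b"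
  assumes lA: "Vector_Spaces.linear scale scale A" and lB: "Vector_Spaces.linear scale scale B"
  and hA1: "A w1 = w2 + t1 *s w1" and hA2: "A w2 = w3 + t2 *s w2"
  and hB1: "B w1 = s1 *s w1 + p1 *s w0" and hB2: "B w2 = s2 *s w2 + p2 *s w1" and hB3: "B w3 = w4"
  and h0: "p1 = 0 \<or> A w0 = w1 + t0 *s w0"
  and E: "A (A (B w1)) - Qc *s A (B (A w1)) + B (A (A w1)) + K1 *s B w1 = K2 *s (ws *s w1) - K3 *s (we *s A w1)"
  and I1: "s1*(t1+t2) + p1 - Qc*(s2*t2 + p2 + t1* s1) + p3 + (t1+t2)* s2 + K3*we = 0"
  and I3: "s1 - Qc* s2 + s3 = 0"
  and I4: "p1 * (t0^2 - Qc*t1*t0 + t1^2 + K1) = 0"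
  shows "w4 = s3 *s w3 + p3 *s w2 - (2* s1*t1^2 + p1*(t0+t1) - Qc*(p2+t1* s1)*t1 - Qc*t1*p1 + (t1+t2)*p2 + K1* s1 - K2*ws + K3*we*t1) *s w1"
proof -
  have a0: "w0 = lc5 scale 1 0 0 0 0 w0 w1 w2 w3 w4" by (simp add: lc5_def)
  have a1: "w1 = lc5 scale 0 1 0 0 0 w0 w1 w2 w3 w4" by (simp add: lc5_def)
  have a2: "w2 = lc5 scale 0 0 1 0 0 w0 w1 w2 w3 w4" by (simp add: lc5_def)
  have a3: "w3 = lc5 scale 0 0 0 1 0 w0 w1 w2 w3 w4" by (simp add: lc5_def)
  have a4: "w4 = lc5 scale 0 0 0 0 1 w0 w1 w2 w3 w4" by (simp add: lc5_def)
  note L = lin_add[OF lA] lin_add[OF lB] lin_scale[OF lA] lin_scale[OF lB] lin_diff[OF lA] lin_diff[OF lB]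
    lin_zero[OF lA] lin_zero[OF lB]
  show ?thesis
  proof (cases "p1 = 0")
    case True
    have hB1': "B w1 = s1 *s w1" using hB1 True by simp
    show ?thesis
      using E
      apply (simp only: L hA1 hA2 hB1' hB2 hB3 scale_zero_left scale_zero_right)
      apply (simp only: a0 a1 a2 a3 a4 lc5_add lc5_diff lc5_scale cong: lc5_cong)
      apply (erule lc5_comb)
      subgoal using I1 I3 True by ((simp; fail) | algebra)
      subgoal using I1 I3 True by ((simp; fail) | algebra)
      subgoal using I1 I3 True by ((simp; fail) | algebra)
      subgoal using I1 I3 True by ((simp; fail) | algebra)
      subgoal using I1 I3 True by ((simp; fail) | algebra)
      done
  next
    case False
    then have hA0: "A w0 = w1 + t0 *s w0" using h0 by simp
    show ?thesis
      using E
      apply (simp only: L hA0 hA1 hA2 hB1 hB2 hB3 scale_zero_left scale_zero_right)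
      apply (simp only: a0 a1 a2 a3 a4 lc5_add lc5_diff lc5_scale cong: lc5_cong)
      apply (erule lc5_comb)
      subgoal by ((simp; fail) | algebra | (use I1 I3 I4 False in algebra))
      subgoal by ((simp; fail) | algebra | (use I1 I3 I4 False in algebra))
      subgoal by ((simp; fail) | algebra | (use I1 I3 I4 False in algebra))
      subgoal by ((simp; fail) | algebra | (use I1 I3 I4 False in algebra))
      subgoal by ((simp; fail) | algebra | (use I1 I3 I4 False in algebra))
      done
  qed
qed


lemma star_pure:
  assumes g1: "G = h *s (CA + k *s (q *s R - iq *s S))"
    and g2: "G = h *s (AC + k *s (q *s P - iq *s R))"
    and bt: "Bt = h *s (T + k *s (q *s CA - iq *s AC))"
    and hi: "hi * h = 1" and qi: "q * iq = 1" and ki: "k * (q^2 - iq^2) = 1" and hh: "h = q + iq"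
  shows "P - (q^2+iq^2) *s R + S + ((q^2-iq^2)^2) *s T = ((q^2-iq^2)*(q-iq)) *s Bt - ((q-iq)^2) *s G"
proof -
  have "hi *s G = CA + k *s (q *s R - iq *s S)" using g1 hi by simp
  then have ca: "CA = hi *s G - k *s (q *s R - iq *s S)" by (simp add: algebra_simps)
  have "hi *s G = AC + k *s (q *s P - iq *s R)" using g2 hi by simp
  then have ac: "AC = hi *s G - k *s (q *s P - iq *s R)" by (simp add: algebra_simps)
  have bt2: "Bt = h *s (T + k *s (q *s (hi *s G - k *s (q *s R - iq *s S)) - iq *s (hi *s G - k *s (q *s P - iq *s R))))"
    using bt unfolding ca ac .
  have a0: "P = lc5 scale 1 0 0 0 0 P R S T G" by (simp add: lc5_def)
  have a1: "R = lc5 scale 0 1 0 0 0 P R S T G" by (simp add: lc5_def)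
  have a2: "S = lc5 scale 0 0 1 0 0 P R S T G" by (simp add: lc5_def)
  have a3: "T = lc5 scale 0 0 0 1 0 P R S T G" by (simp add: lc5_def)
  have a4: "G = lc5 scale 0 0 0 0 1 P R S T G" by (simp add: lc5_def)
  show ?thesis
    unfolding bt2
    apply (simp only: a0 a1 a2 a3 a4 lc5_add lc5_diff lc5_scale cong: lc5_cong)
    apply (rule lc5_cong)
    subgoal by ((simp; fail) | algebra | (use qi ki hh in algebra) | (use qi ki hi in algebra))
    subgoal by ((simp; fail) | algebra | (use qi ki hh in algebra) | (use qi ki hi in algebra))
    subgoal by ((simp; fail) | algebra | (use qi ki hh in algebra) | (use qi ki hi in algebra))
    subgoal by ((simp; fail) | algebra | (use qi ki hh in algebra) | (use qi ki hi in algebra))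
    subgoal by ((simp; fail) | algebra | (use qi ki hh in algebra) | (use qi ki hi in algebra))
    done
qed

end

context vector_space begin

lemma gen1:
  assumes "BX = s1 *s X + r *s V"
  shows "BX - t0 *s (s0 *s V) - (s1 *s (X - t0 *s V) + p1 *s V) = (t0*(s1 - s0) + r - p1) *s V"
  using assms by (simp add: algebra_simps)

lemma D_zero: "w = x - D *s y \<Longrightarrow> w = x \<Longrightarrow> y \<noteq> 0 \<Longrightarrow> D = 0"
  by simp

lemma gen_C:
  assumes "G = h *s (Cy + k *s Z)" "G = g *s y" "ih * h = 1" "ih * m = k"
  shows "Cy = ih *s (g *s y - m *s Z)"
proof -
  have "ih *s G = Cy + k *s Z" using assms(1,3) by simp
  then have "Cy = ih *s G - k *s Z" by (simp add: algebra_simps)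
  then show ?thesis using assms(2,4) by (simp add: algebra_simps)
qed

lemma gen_gamma:
  assumes "Cy = ih *s (g *s y - m *s Z)" "h * ih = 1" "ih * m = k"
  shows "h *s (Cy + k *s Z) = g *s y"
proof -
  have hk: "h * k = m" using assms(2,3) by (metis mult.assoc mult_1)
  have c1: "h *s Cy = g *s y - m *s Z" using assms(1) by (simp add: assms(2))
  have "h *s (Cy + k *s Z) = h *s Cy + (h * k) *s Z" by (simp add: scale_right_distrib)
  also have "\<dots> = g *s y" using c1 hk by simp
  finally show ?thesis .
qed

end

lemma lin_sum2: "Vector_Spaces.linear s1 s2 f \<Longrightarrow> f (sum g S) = (\<Sum>i\<in>S. f (g i))"
  by (metis module_hom.sum module_hom_iff_linear)
lemma lin_scale2: "Vector_Spaces.linear s1 s2 f \<Longrightarrow> f (s1 c x) = s2 c (f x)"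
  by (metis module_hom.scale module_hom_iff_linear)
lemma lin_diff2: "Vector_Spaces.linear s1 s2 f \<Longrightarrow> f (x - y) = f x - f y"
  by (metis module_hom.diff module_hom_iff_linear)
lemma lin_zero2: "Vector_Spaces.linear s1 s2 f \<Longrightarrow> f 0 = 0"
  by (metis module_hom.zero module_hom_iff_linear)
lemma lin_add2: "Vector_Spaces.linear s1 s2 f \<Longrightarrow> f (x + y) = f x + f y"
  by (metis module_hom.add module_hom_iff_linear)

lemma q_facts:
  fixes q :: "'a::field"
  assumes "root_of_unity_order q d" "d \<notin> {1, 2, 4}"
  shows "q \<noteq> 0" "q^4 \<noteq> 1"
proof -
  from assms(1) have d0: "0 < d" and qd: "q^d = 1" and mn: "\<forall>k. 0 < k \<and> k < d \<longrightarrow> q^k \<noteq> 1"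
    unfolding root_of_unity_order_def by auto
  show "q \<noteq> 0"
  proof
    assume "q = 0"
    then have "q^d = 0" using d0 by simp
    then show False using qd by simp
  qed
  show "q^4 \<noteq> 1"
  proof
    assume q4: "q^4 = 1"
    have "\<not> 4 < d" using mn q4 by auto
    then have d3: "d = 3" using d0 assms(2) by auto
    then have q3: "q^3 = 1" using qd by simp
    have "q^4 = q^3 * q" by algebra
    then have "q = 1" using q3 q4 by simp
    then show False using mn[rule_format, of 1] d3 by simp
  qed
qed

lemma q_nz:
  fixes q :: "'a::field"
  assumes q0: "q \<noteq> 0" and q4: "q^4 \<noteq> 1"
  shows "q + inverse q \<noteq> 0" "q - inverse q \<noteq> 0" "q^2 - inverse q^2 \<noteq> 0"
proof -
  have e: "q^2 * (q^2 - inverse q^2) = q^4 - 1" using q0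
    by (simp add: field_simps eval_nat_numeral)
  then show c: "q^2 - inverse q^2 \<noteq> 0" using q4 by auto
  have "(q + inverse q) * (q - inverse q) = q^2 - inverse q^2" by algebra
  then show "q + inverse q \<noteq> 0" "q - inverse q \<noteq> 0" using c by auto
qed

lemma tri_facts:
  assumes tm: "tri_module q sc A B C"
  shows "vector_space sc" "Vector_Spaces.linear sc sc A" "Vector_Spaces.linear sc sc B" "Vector_Spaces.linear sc sc C"
    "\<And>x. tri_gamma q sc A B C (A x) = A (tri_gamma q sc A B C x)"
    "\<And>x. tri_beta q sc A B C (A x) = A (tri_beta q sc A B C x)"
  using tm unfolding tri_module_def by auto

lemma tri_lin:
  assumes tm: "tri_module q sc A B C"
  shows "Vector_Spaces.linear sc sc (tri_gamma q sc A B C)" "Vector_Spaces.linear sc sc (tri_beta q sc A B C)"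
proof -
  note f = tri_facts[OF tm]
  interpret vector_space sc by (rule f(1))
  note L = lin_add[OF f(2)] lin_add[OF f(3)] lin_add[OF f(4)] lin_scale[OF f(2)] lin_scale[OF f(3)] lin_scale[OF f(4)]
  show "Vector_Spaces.linear sc sc (tri_gamma q sc A B C)"
    unfolding Vector_Spaces.linear_iff
  proof (intro conjI allI)
    show "vector_space sc" by (rule f(1))
    show "vector_space sc" by (rule f(1))
    fix x y c
    show "tri_gamma q sc A B C (x + y) = tri_gamma q sc A B C x + tri_gamma q sc A B C y"
      unfolding tri_gamma_def by (simp add: L algebra_simps)
    show "tri_gamma q sc A B C (sc c x) = sc c (tri_gamma q sc A B C x)"
      unfolding tri_gamma_def by (simp add: L algebra_simps)
  qed
  show "Vector_Spaces.linear sc sc (tri_beta q sc A B C)"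
    unfolding Vector_Spaces.linear_iff
  proof (intro conjI allI)
    show "vector_space sc" by (rule f(1))
    show "vector_space sc" by (rule f(1))
    fix x y c
    show "tri_beta q sc A B C (x + y) = tri_beta q sc A B C x + tri_beta q sc A B C y"
      unfolding tri_beta_def by (simp add: L algebra_simps)
    show "tri_beta q sc A B C (sc c x) = sc c (tri_beta q sc A B C x)"
      unfolding tri_beta_def by (simp add: L algebra_simps)
  qed
qed

lemma star:
  fixes sc :: "'a::field \<Rightarrow> 'v::ab_group_add \<Rightarrow> 'v"
  assumes tm: "tri_module q sc A B C" and q0: "q \<noteq> 0" and q4: "q^4 \<noteq> 1"
  shows "A (A (B x)) - sc (q^2 + inverse q^2) (A (B (A x))) + B (A (A x)) + sc ((q^2 - inverse q^2)^2) (B x)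
   = sc ((q^2 - inverse q^2)*(q - inverse q)) (tri_beta q sc A B C x) - sc ((q - inverse q)^2) (tri_gamma q sc A B C (A x))"
proof -
  note f = tri_facts[OF tm]
  interpret vector_space sc by (rule f(1))
  note hq = q_nz[OF q0 q4]
  note L = lin_add[OF f(2)] lin_diff[OF f(2)] lin_scale[OF f(2)]
  show ?thesis
  proof (rule star_pure)
    show "tri_gamma q sc A B C (A x) = sc (q + inverse q) (C (A x) + sc (inverse (q^2 - inverse q^2)) (sc q (A (B (A x))) - sc (inverse q) (B (A (A x)))))"
      by (simp add: tri_gamma_def)
    show "tri_gamma q sc A B C (A x) = sc (q + inverse q) (A (C x) + sc (inverse (q^2 - inverse q^2)) (sc q (A (A (B x))) - sc (inverse q) (A (B (A x)))))"
      unfolding f(5) by (simp add: tri_gamma_def L)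
    show "tri_beta q sc A B C x = sc (q + inverse q) (B x + sc (inverse (q^2 - inverse q^2)) (sc q (C (A x)) - sc (inverse q) (A (C x))))"
      by (simp add: tri_beta_def)
    show "inverse (q + inverse q) * (q + inverse q) = 1" using hq by simp
    show "q * inverse q = 1" using q0 by simp
    show "inverse (q^2 - inverse q^2) * (q^2 - inverse q^2) = 1" using hq by simp
    show "q + inverse q = q + inverse q" ..
  qed
qed

lemma lookup_Msc: "Poly_Mapping.lookup (Msc t x) j = t * Poly_Mapping.lookup x j"
  unfolding Msc_def by (simp add: Poly_Mapping.map.rep_eq when_def)

lemma keys_Msc: "Poly_Mapping.keys (Msc t x) \<subseteq> Poly_Mapping.keys x"
  by (auto simp: in_keys_iff lookup_Msc)

lemma vs_Msc: "vector_space (Msc :: 'a::field \<Rightarrow> _)"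
  unfolding vector_space_def
  by (auto intro!: poly_mapping_eqI simp: lookup_Msc lookup_add algebra_simps)

lemma Msc_single: "Msc t (Poly_Mapping.single i c) = Poly_Mapping.single i (t * c)"
  unfolding Msc_def by simp

definition fv :: "('a::field \<Rightarrow> 'v::ab_group_add \<Rightarrow> 'v) \<Rightarrow> (nat \<Rightarrow> 'v) \<Rightarrow> (nat \<Rightarrow>\<^sub>0 'a) \<Rightarrow> 'v" where
  "fv sc vv x = (\<Sum>j\<in>Poly_Mapping.keys x. sc (Poly_Mapping.lookup x j) (vv j))"

context vector_space begin

lemma fv_superset:
  assumes "finite S" "Poly_Mapping.keys x \<subseteq> S"
  shows "fv scale vv x = (\<Sum>j\<in>S. Poly_Mapping.lookup x j *s vv j)"
  unfolding fv_def
  by (rule sum.mono_neutral_left) (use assms in \<open>auto simp: in_keys_iff\<close>)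

lemma fv_linear: "Vector_Spaces.linear Msc scale (fv scale vv)"
  unfolding Vector_Spaces.linear_iff
proof (intro conjI allI)
  show "vector_space (Msc :: 'a \<Rightarrow> _)" by (rule vs_Msc)
  show "vector_space scale" by unfold_locales
  fix x y :: "nat \<Rightarrow>\<^sub>0 'a"
  let ?S = "Poly_Mapping.keys x \<union> Poly_Mapping.keys y"
  have fS: "finite ?S" by simp
  have "fv scale vv (x + y) = (\<Sum>j\<in>?S. Poly_Mapping.lookup (x + y) j *s vv j)"
    by (rule fv_superset[OF fS keys_add])
  also have "\<dots> = (\<Sum>j\<in>?S. Poly_Mapping.lookup x j *s vv j) + (\<Sum>j\<in>?S. Poly_Mapping.lookup y j *s vv j)"
    by (simp add: lookup_add scale_left_distrib sum.distrib)
  also have "\<dots> = fv scale vv x + fv scale vv y"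
    by (simp only: fv_superset[OF fS Un_upper1] fv_superset[OF fS Un_upper2])
  finally show "fv scale vv (x + y) = fv scale vv x + fv scale vv y" .
next
  fix c and x :: "nat \<Rightarrow>\<^sub>0 'a"
  have "fv scale vv (Msc c x) = (\<Sum>j\<in>Poly_Mapping.keys x. Poly_Mapping.lookup (Msc c x) j *s vv j)"
    by (rule fv_superset) (simp_all add: keys_Msc)
  also have "\<dots> = c *s fv scale vv x"
    by (simp add: lookup_Msc fv_def scale_sum_right)
  finally show "fv scale vv (Msc c x) = c *s fv scale vv x" .
qed

lemma fv_single: "fv scale vv (Poly_Mapping.single i c) = c *s vv i"
  unfolding fv_def by simp

lemma fv_MA:
  assumes lA: "Vector_Spaces.linear scale scale A"
    and hA: "\<And>i. A (vv i) = vv (Suc i) + t i *s vv i"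
  shows "fv scale vv (\<Sum>i\<in>Poly_Mapping.keys x. Poly_Mapping.single i (Poly_Mapping.lookup x i * t i)
                                 + Poly_Mapping.single (Suc i) (Poly_Mapping.lookup x i)) = A (fv scale vv x)"
proof -
  have lf: "Vector_Spaces.linear Msc scale (fv scale vv)" by (rule fv_linear)
  show ?thesis
    unfolding lin_sum2[OF lf] fv_def[of _ _ x] lin_sum2[OF lA]
    by (rule sum.cong) (simp_all add: lin_add2[OF lf] fv_single lin_scale[OF lA] hA algebra_simps)
qed

lemma fv_MB:
  assumes lB: "Vector_Spaces.linear scale scale B"
    and hB: "\<And>i. B (vv i) = s i *s vv i + p i *s vv (i - 1)" and p0: "p 0 = 0"
  shows "fv scale vv (\<Sum>i\<in>Poly_Mapping.keys x. Poly_Mapping.single i (Poly_Mapping.lookup x i * s i)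
       + (if i = 0 then 0 else Poly_Mapping.single (i - 1) (Poly_Mapping.lookup x i * p i))) = B (fv scale vv x)"
proof -
  have lf: "Vector_Spaces.linear Msc scale (fv scale vv)" by (rule fv_linear)
  show ?thesis
    unfolding lin_sum2[OF lf] fv_def[of _ _ x] lin_sum2[OF lB]
    by (rule sum.cong) (auto simp add: lin_add2[OF lf] fv_single lin_scale[OF lB] hB p0 algebra_simps lin_zero2[OF lf])
qed

end


definition TTf :: "'a::field \<Rightarrow> 'a \<Rightarrow> 'a \<Rightarrow> 'a" where
  "TTf a lam X = a * inverse lam * X^2 + inverse a * lam * inverse X ^ 2"
definition PPf :: "'a::field \<Rightarrow> 'a \<Rightarrow> 'a \<Rightarrow> 'a \<Rightarrow> 'a \<Rightarrow> 'a \<Rightarrow> 'a" where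
  "PPf q a b c lam X = inverse a * inverse b * lam * q * (X - inverse X)
     * (inverse lam * X * inverse q - lam * q * inverse X)
     * (inverse X - a * b * c * inverse lam * X * inverse q)
     * (inverse X - a * b * inverse c * inverse lam * X * inverse q)"

lemma thetaM_TT: "thetaM q a lam i = TTf a lam (q^i)"
  unfolding thetaM_def TTf_def by (simp add: power_mult[symmetric] power_inverse mult.commute)
lemma thetaM_s_TT: "thetaM_s q b lam i = TTf b lam (q^i)"
  unfolding thetaM_s_def TTf_def by (simp add: power_mult[symmetric] power_inverse mult.commute)
lemma phiM_PP: "phiM q a b c lam i = PPf q a b c lam (q^i)"
  unfolding phiM_def PPf_def by (simp add: power_inverse)

lemma Id3_poly:
  fixes a b c lam q X ia ib ic il iq iX :: "'a::field"
  assumes "a*ia = 1" "b*ib=1" "c*ic=1" "lam*il=1" "q*iq=1" "X*iX=1"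
  shows "(b * il * (X)^2 + ib * lam * (iX) ^ 2) - (q^2 + iq^2) * (b * il * (X*q)^2 + ib * lam * (iX*iq) ^ 2) + (b * il * (X*q*q)^2 + ib * lam * (iX*iq*iq) ^ 2) = 0"
  using assms by algebra

lemma Id4_poly:
  fixes a b c lam q X ia ib ic il iq iX :: "'a::field"
  assumes "a*ia = 1" "b*ib=1" "c*ic=1" "lam*il=1" "q*iq=1" "X*iX=1"
  shows "((a * il * (X*iq)^2 + ia * lam * (iX*q) ^ 2))^2 - (q^2 + iq^2) * (a * il * (X)^2 + ia * lam * (iX) ^ 2) * (a * il * (X*iq)^2 + ia * lam * (iX*q) ^ 2) + ((a * il * (X)^2 + ia * lam * (iX) ^ 2)) ^ 2 + (q^2 - iq^2)^2 = 0"
  using assms by algebra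

lemma Id1_poly:
  fixes a b c lam q X ia ib ic il iq iX :: "'a::field"
  assumes "a*ia = 1" "b*ib=1" "c*ic=1" "lam*il=1" "q*iq=1" "X*iX=1"
  shows "(b * il * (X)^2 + ib * lam * (iX) ^ 2) * ((a * il * (X)^2 + ia * lam * (iX) ^ 2) + (a * il * (X*q)^2 + ia * lam * (iX*iq) ^ 2)) + (ia * ib * lam * q * ((X) - (iX)) * (il * (X) * iq - lam * q * (iX)) * ((iX) - a * b * c * il * (X) * iq) * ((iX) - a * b * ic * il * (X) * iq)) - (q^2 + iq^2) * ((b * il * (X*q)^2 + ib * lam * (iX*iq) ^ 2) * (a * il * (X*q)^2 + ia * lam * (iX*iq) ^ 2) + (ia * ib * lam * q * ((X*q) - (iX*iq)) * (il * (X*q) * iq - lam * q * (iX*iq)) * ((iX*iq) - a * b * c * il * (X*q) * iq) * ((iX*iq) - a * b * ic * il * (X*q) * iq)) + (a * il * (X)^2 + ia * lam * (iX) ^ 2) * (b * il * (X)^2 + ib * lam * (iX) ^ 2)) + (ia * ib * lam * q * ((X*q*q) - (iX*iq*iq)) * (il * (X*q*q) * iq - lam * q * (iX*iq*iq)) * ((iX*iq*iq) - a * b * c * il * (X*q*q) * iq) * ((iX*iq*iq) - a * b * ic * il * (X*q*q) * iq)) + ((a * il * (X)^2 + ia * lam * (iX) ^ 2) + (a * il * (X*q)^2 + ia * lam * (iX*iq) ^ 2)) * (b * il * (X*q)^2 + ib * lam * (iX*iq) ^ 2) + (q - iq)^2 * ((a + ia) * (b + ib) + (c + ic) * (lam *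 q + il * iq)) = 0"
  using assms by algebra

lemma Id2_poly:
  fixes a b c lam q X ia ib ic il iq iX :: "'a::field"
  assumes "a*ia = 1" "b*ib=1" "c*ic=1" "lam*il=1" "q*iq=1" "X*iX=1"
  shows "2 * (b * il * (X)^2 + ib * lam * (iX) ^ 2) * ((a * il * (X)^2 + ia * lam * (iX) ^ 2))^2 + (ia * ib * lam * q * ((X) - (iX)) * (il * (X) * iq - lam * q * (iX)) * ((iX) - a * b * c * il * (X) * iq) * ((iX) - a * b * ic * il * (X) * iq)) * ((a * il * (X*iq)^2 + ia * lam * (iX*q) ^ 2) + (a * il * (X)^2 + ia * lam * (iX) ^ 2)) - (q^2 + iq^2) * ((ia * ib * lam * q * ((X*q) - (iX*iq)) * (il * (X*q) * iq - lam * q * (iX*iq)) * ((iX*iq) - a * b * c * il * (X*q) * iq) * ((iX*iq) - a * b * ic * il * (X*q) * iq)) + (a * il * (X)^2 + ia * lam * (iX) ^ 2) * (b * il * (X)^2 + ib * lam * (iX) ^ 2)) * (a * il * (X)^2 + ia * lam * (iX) ^ 2) - (q^2 + iq^2) * (a * il * (X)^2 + ia * lam * (iX) ^ 2) * (ia * ib * lam * q * ((X) - (iX)) * (il * (X) * iq - lam * q * (iX)) * ((iX) - a * b * c * il * (X) * iq) * ((iX) - a * b * ic * il * (X) * iq)) + ((a * il * (X)^2 + ia * lam * (iX) ^ 2) + (a * il * (X*q)^2 + ia * lam * (iX*iq) ^ 2)) * (ia * ib * lam * q * ((X*q) - (iX*iq)) * (il * (X*q) * iq - lam * q * (iX*iq))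 * ((iX*iq) - a * b * c * il * (X*q) * iq) * ((iX*iq) - a * b * ic * il * (X*q) * iq)) + (q^2 - iq^2)^2 * (b * il * (X)^2 + ib * lam * (iX) ^ 2) - (q^2 - iq^2) * (q - iq) * ((c + ic) * (a + ia) + (b + ib) * (lam * q + il * iq)) + (q - iq)^2 * ((a + ia) * (b + ib) + (c + ic) * (lam * q + il * iq)) * (a * il * (X)^2 + ia * lam * (iX) ^ 2) = 0"
  using assms by algebra

lemma Id0_poly:
  fixes a b c lam q ia ib ic il iq :: "'a::field"
  assumes "a*ia = 1" "b*ib=1" "c*ic=1" "lam*il=1" "q*iq=1"
  shows "(ia * ib * lam * q * ((q) - (iq)) * (il * (q) * iq - lam * q * (iq)) * ((iq) - a * b * c * il * (q) * iq) * ((iq) - a * b * ic * il * (q) * iq)) = (a * il + ia * lam) * ((b * il * (q)^2 + ib * lam * (iq) ^ 2) - (b * il + ib * lam)) + (q - iq) * ((c + ic) * (lam - il) - (a + ia) * (b * q - ib * iq))"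
  using assms by algebra

lemma Id3:
  fixes q a b c lam X :: "'a::field"
  assumes "q \<noteq> 0" "a \<noteq> 0" "b \<noteq> 0" "c \<noteq> 0" "lam \<noteq> 0" "X \<noteq> 0"
  shows "TTf b lam X - (q^2 + inverse q^2) * TTf b lam (X*q) + TTf b lam (X*q*q) = 0"
  unfolding TTf_def PPf_def gammaM_def inverse_mult_distrib inverse_inverse_eq
  by (rule Id3_poly[where a=a and b=b and c=c and lam=lam and q=q and X=X and ia="inverse a" and ib="inverse b" and ic="inverse c" and il="inverse lam" and iq="inverse q" and iX="inverse X"]) (use assms in simp_all)

lemma Id4:
  fixes q a b c lam X :: "'a::field"
  assumes "q \<noteq> 0" "a \<noteq> 0" "b \<noteq> 0" "c \<noteq> 0" "lam \<noteq> 0" "X \<noteq> 0"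
  shows "TTf a lam (X*inverse q)^2 - (q^2 + inverse q^2) * TTf a lam X * TTf a lam (X*inverse q) + TTf a lam X ^ 2 + (q^2 - inverse q^2)^2 = 0"
  unfolding TTf_def PPf_def gammaM_def inverse_mult_distrib inverse_inverse_eq
  by (rule Id4_poly[where a=a and b=b and c=c and lam=lam and q=q and X=X and ia="inverse a" and ib="inverse b" and ic="inverse c" and il="inverse lam" and iq="inverse q" and iX="inverse X"]) (use assms in simp_all)

lemma Id1:
  fixes q a b c lam X :: "'a::field"
  assumes "q \<noteq> 0" "a \<noteq> 0" "b \<noteq> 0" "c \<noteq> 0" "lam \<noteq> 0" "X \<noteq> 0"
  shows "TTf b lam X * (TTf a lam X + TTf a lam (X*q)) + PPf q a b c lam X
     - (q^2 + inverse q^2) * (TTf b lam (X*q) * TTf a lam (X*q) + PPf q a b c lam (X*q) + TTf a lam X * TTf b lam X)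
     + PPf q a b c lam (X*q*q) + (TTf a lam X + TTf a lam (X*q)) * TTf b lam (X*q)
     + (q - inverse q)^2 * gammaM q a b c lam = 0"
  unfolding TTf_def PPf_def gammaM_def inverse_mult_distrib inverse_inverse_eq
  by (rule Id1_poly[where a=a and b=b and c=c and lam=lam and q=q and X=X and ia="inverse a" and ib="inverse b" and ic="inverse c" and il="inverse lam" and iq="inverse q" and iX="inverse X"]) (use assms in simp_all)

lemma Id2:
  fixes q a b c lam X :: "'a::field"
  assumes "q \<noteq> 0" "a \<noteq> 0" "b \<noteq> 0" "c \<noteq> 0" "lam \<noteq> 0" "X \<noteq> 0"
  shows "2 * TTf b lam X * (TTf a lam X)^2 + PPf q a b c lam X * (TTf a lam (X*inverse q) + TTf a lam X)
     - (q^2 + inverse q^2) * (PPf q a b c lam (X*q) + TTf a lam X * TTf b lam X) * TTf a lam X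
     - (q^2 + inverse q^2) * TTf a lam X * PPf q a b c lam X
     + (TTf a lam X + TTf a lam (X*q)) * PPf q a b c lam (X*q)
     + (q^2 - inverse q^2)^2 * TTf b lam X
     - (q^2 - inverse q^2) * (q - inverse q) * ((c + inverse c) * (a + inverse a) + (b + inverse b) * (lam * q + inverse lam * inverse q))
     + (q - inverse q)^2 * gammaM q a b c lam * TTf a lam X = 0"
  unfolding TTf_def PPf_def gammaM_def inverse_mult_distrib inverse_inverse_eq
  by (rule Id2_poly[where a=a and b=b and c=c and lam=lam and q=q and X=X and ia="inverse a" and ib="inverse b" and ic="inverse c" and il="inverse lam" and iq="inverse q" and iX="inverse X"]) (use assms in simp_all)

lemma Id0:
  fixes q a b c lam :: "'a::field"
  assumes "q \<noteq> 0" "a \<noteq> 0" "b \<noteq> 0" "c \<noteq> 0" "lam \<noteq> 0"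
  shows "PPf q a b c lam q = TTf a lam 1 * (TTf b lam q - TTf b lam 1)
     + (q - inverse q) * ((c + inverse c) * (lam - inverse lam) - (a + inverse a) * (b * q - inverse b * inverse q))"
  unfolding TTf_def PPf_def inverse_1 power_one mult_1_right
  by (rule Id0_poly[where a=a and b=b and c=c and lam=lam and q=q and ia="inverse a" and ib="inverse b" and ic="inverse c" and il="inverse lam" and iq="inverse q"]) (use assms in simp_all)

lemma PP0: "PPf q a b c lam 1 = 0" unfolding PPf_def by simp


lemma cancel_ws: "(R::'a::field) - k * x + S = 0 \<Longrightarrow> R - k * y + S = 0 \<Longrightarrow> k \<noteq> 0 \<Longrightarrow> x = y"
proof -
  assume h: "R - k * x + S = 0" "R - k * y + S = 0" "k \<noteq> 0"
  then have "k * (x - y) = 0" by (simp add: algebra_simps)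
  then show "x = y" using h(3) by simp
qed

theorem theorem3p3:
  fixes q a b c lam mu ph ws we :: "'a::alg_closed_field"
    and sc :: "'a \<Rightarrow> 'v::ab_group_add \<Rightarrow> 'v"
    and A B C :: "'v \<Rightarrow> 'v" and v :: 'v and d :: nat
  assumes "root_of_unity_order q d" and "d \<notin> {1, 2, 4}"
    and "a \<noteq> 0" "b \<noteq> 0" "c \<noteq> 0" "lam \<noteq> 0" "mu \<noteq> 0"
    and "tri_module q sc A B C"
    and "v \<noteq> 0"
    and "B v = sc (mu + inverse mu) v"
    and "B (A v) - sc (mu * q^2 + inverse mu * inverse q ^ 2) (A v) = sc ((q - inverse q) * ph) v"
    and "tri_beta q sc A B C v = sc ws v"
    and "tri_gamma q sc A B C v = sc we v"
  shows "feasible q a b c lam mu ph ws we \<longleftrightarrow>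
           (mu = b * inverse lam \<and>
            (\<exists>f. M_hom q a b c lam sc A B C f \<and> f (Poly_Mapping.single 0 1) = v))"
proof -
  note nz = assms(3-6)
  have q0: "q \<noteq> 0" and q4: "q^4 \<noteq> 1" using q_facts[OF assms(1,2)] by auto
  note hq = q_nz[OF q0 q4]
  have tm: "tri_module q sc A B C" by (rule assms(8))
  note tf = tri_facts[OF tm]
  interpret vector_space sc by (rule tf(1))
  note lA = tf(2) and lB = tf(3) and lC = tf(4)
  note lg = tri_lin(1)[OF tm] and lb = tri_lin(2)[OF tm]
  note starx = star[OF tm q0 q4]
  define gM where "gM = gammaM q a b c lam"
  define wsF where "wsF = (c + inverse c) * (a + inverse a) + (b + inverse b) * (lam * q + inverse lam * inverse q)"
  define phF where "phF = (c + inverse c) * (lam - inverse lam) - (a + inverse a) * (b * q - inverse b * inverse q)"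
  have feas_iff: "feasible q a b c lam mu ph ws we \<longleftrightarrow> mu = b * inverse lam \<and> ph = phF \<and> ws = wsF \<and> we = gM"
    unfolding feasible_def phF_def wsF_def gM_def gammaM_def by simp
  have qpow: "\<And>i. q^i \<noteq> 0" using q0 by simp
  have ih: "inverse (q + inverse q) * (q + inverse q) = 1" using hq by simp
  have ihm: "inverse (q + inverse q) * inverse (q - inverse q) = inverse (q^2 - inverse q^2)"
  proof -
    have "(q + inverse q) * (q - inverse q) = q^2 - inverse q^2" by algebra
    then show ?thesis by (metis inverse_mult_distrib)
  qed
  have step_V: "B w3 = sc (TTf b lam (X*q*q)) w3 + sc (PPf q a b c lam (X*q*q)) w2 - sc
     (2 * TTf b lam X * (TTf a lam X)^2 + PPf q a b c lam X * (TTf a lam (X*inverse q) + TTf a lam X)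
     - (q^2 + inverse q^2) * (PPf q a b c lam (X*q) + TTf a lam X * TTf b lam X) * TTf a lam X
     - (q^2 + inverse q^2) * TTf a lam X * PPf q a b c lam X
     + (TTf a lam X + TTf a lam (X*q)) * PPf q a b c lam (X*q)
     + (q^2 - inverse q^2)^2 * TTf b lam X
     - (q^2 - inverse q^2) * (q - inverse q) * wsx
     + (q - inverse q)^2 * gM * TTf a lam X) w1"
    if X0: "X \<noteq> 0"
      and hA1: "A w1 = w2 + sc (TTf a lam X) w1" and hA2: "A w2 = w3 + sc (TTf a lam (X*q)) w2"
      and hB1: "B w1 = sc (TTf b lam X) w1 + sc (PPf q a b c lam X) w0"
      and hB2: "B w2 = sc (TTf b lam (X*q)) w2 + sc (PPf q a b c lam (X*q)) w1"
      and h0: "PPf q a b c lam X = 0 \<or> A w0 = w1 + sc (TTf a lam (X*inverse q)) w0"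
      and bw: "tri_beta q sc A B C w1 = sc wsx w1" and gw: "tri_gamma q sc A B C w1 = sc gM w1"
    for X w0 w1 w2 w3 wsx
  proof -
    have E: "A (A (B w1)) - sc (q^2 + inverse q^2) (A (B (A w1))) + B (A (A w1)) + sc ((q^2 - inverse q^2)^2) (B w1)
      = sc ((q^2 - inverse q^2)*(q - inverse q)) (sc wsx w1) - sc ((q - inverse q)^2) (sc gM (A w1))"
      using starx[of w1] by (simp add: bw tf(5) gw lin_scale[OF lA])
    show ?thesis
      apply (rule step[OF lA lB hA1 hA2 hB1 hB2 refl h0 E])
      subgoal using Id1[OF q0 nz X0] by (simp add: gM_def)
      subgoal using Id3[OF q0 nz X0] by simp
      subgoal using Id4[OF q0 nz X0] by simp
      done
  qed
  show ?thesis
  proof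
    assume feas: "feasible q a b c lam mu ph ws we"
    then have mu: "mu = b * inverse lam" and phe: "ph = phF" and wse: "ws = wsF" and wee: "we = gM"
      using feas_iff by auto
    define vv where "vv = rec_nat v (\<lambda>i x. A x - sc (thetaM q a lam i) x)"
    have vv0: "vv 0 = v" and vvS: "\<And>i. vv (Suc i) = A (vv i) - sc (thetaM q a lam i) (vv i)"
      by (simp_all add: vv_def)
    have hA: "\<And>i. A (vv i) = vv (Suc i) + sc (thetaM q a lam i) (vv i)" using vvS by simp
    have gv: "tri_gamma q sc A B C (vv i) = sc gM (vv i)" for i
    proof (induction i)
      case 0 then show ?case using assms(13) wee vv0 by simp
    next
      case (Suc i) then show ?case
        by (simp add: vvS lin_diff[OF lg] lin_scale[OF lg] tf(5) lin_scale[OF lA] scale_right_diff_distrib mult.commute)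
    qed
    have bv: "tri_beta q sc A B C (vv i) = sc ws (vv i)" for i
    proof (induction i)
      case 0 then show ?case using assms(12) vv0 by simp
    next
      case (Suc i) then show ?case
        by (simp add: vvS lin_diff[OF lb] lin_scale[OF lb] tf(6) lin_scale[OF lA] scale_right_diff_distrib mult.commute)
    qed
    have s0: "TTf b lam 1 = mu + inverse mu" unfolding TTf_def mu by (simp add: mult.commute)
    have s1: "TTf b lam q = mu * q^2 + inverse mu * inverse q ^ 2" unfolding TTf_def mu
      by (simp add: mult.commute power_inverse)
    have P0: "B (vv 0) = sc (TTf b lam 1) (vv 0)" using assms(10) vv0 s0 by simp
    have P1: "B (vv 1) = sc (TTf b lam q) (vv 1) + sc (PPf q a b c lam q) (vv 0)"
    proof -
      have BX: "B (A v) = sc (TTf b lam q) (A v) + sc ((q - inverse q) * ph) v"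
        using assms(11) s1 by (simp add: algebra_simps)
      have "B (vv 1) = B (A v) - sc (TTf a lam 1) (sc (TTf b lam 1) v)"
        using vvS[of 0] vv0 P0 by (simp add: lin_diff[OF lB] lin_scale[OF lB] thetaM_TT)
      moreover have "vv 1 = A v - sc (TTf a lam 1) v" using vvS[of 0] vv0 by (simp add: thetaM_TT)
      moreover have "TTf a lam 1 * (TTf b lam q - TTf b lam 1) + (q - inverse q) * ph - PPf q a b c lam q = 0"
        using Id0[OF q0 nz] phe phF_def by simp
      ultimately show ?thesis using gen1[OF BX, of "TTf a lam 1" "TTf b lam 1" "PPf q a b c lam q"] vv0
        by simp
    qed
    have Pall: "B (vv i) = sc (TTf b lam (q^i)) (vv i) + sc (PPf q a b c lam (q^i)) (vv (i - 1))
       \<and> B (vv (Suc i)) = sc (TTf b lam (q^Suc i)) (vv (Suc i)) + sc (PPf q a b c lam (q^Suc i)) (vv i)" for i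
    proof (induction i)
      case 0 then show ?case using P0 P1 by (simp add: PP0)
    next
      case (Suc i)
      have X0: "q^i \<noteq> 0" by (rule qpow)
      have hA1: "A (vv i) = vv (Suc i) + sc (TTf a lam (q^i)) (vv i)" using hA[of i] by (simp add: thetaM_TT)
      have hA2: "A (vv (Suc i)) = vv (Suc (Suc i)) + sc (TTf a lam (q^i * q)) (vv (Suc i))"
        using hA[of "Suc i"] by (simp add: thetaM_TT mult.commute)
      have hB1: "B (vv i) = sc (TTf b lam (q^i)) (vv i) + sc (PPf q a b c lam (q^i)) (vv (i - 1))"
        using Suc.IH by simp
      have hB2: "B (vv (Suc i)) = sc (TTf b lam (q^i*q)) (vv (Suc i)) + sc (PPf q a b c lam (q^i*q)) (vv i)"
        using Suc.IH by (simp add: mult.commute)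
      have h0: "PPf q a b c lam (q^i) = 0 \<or> A (vv (i - 1)) = vv i + sc (TTf a lam (q^i * inverse q)) (vv (i - 1))"
      proof (cases i)
        case 0 then show ?thesis by (simp add: PP0)
      next
        case (Suc j)
        have e: "q^i * inverse q = q^j" using Suc q0 by (simp add: power_Suc2 mult.assoc del: power_Suc)
        have "A (vv (i - 1)) = vv i + sc (TTf a lam (q^i * inverse q)) (vv (i - 1))"
          unfolding e using hA[of j] Suc by (simp add: thetaM_TT)
        then show ?thesis by simp
      qed
      have D0: "2 * TTf b lam (q^i) * (TTf a lam (q^i))^2 + PPf q a b c lam (q^i) * (TTf a lam (q^i*inverse q) + TTf a lam (q^i))
     - (q^2 + inverse q^2) * (PPf q a b c lam (q^i*q) + TTf a lam (q^i) * TTf b lam (q^i)) * TTf a lam (q^i)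
     - (q^2 + inverse q^2) * TTf a lam (q^i) * PPf q a b c lam (q^i)
     + (TTf a lam (q^i) + TTf a lam (q^i*q)) * PPf q a b c lam (q^i*q)
     + (q^2 - inverse q^2)^2 * TTf b lam (q^i)
     - (q^2 - inverse q^2) * (q - inverse q) * ws
     + (q - inverse q)^2 * gM * TTf a lam (q^i) = 0"
        using Id2[OF q0 nz X0] wse wsF_def gM_def by simp
      have "B (vv (Suc (Suc i))) = sc (TTf b lam (q^i*q*q)) (vv (Suc (Suc i))) + sc (PPf q a b c lam (q^i*q*q)) (vv (Suc i))"
        using step_V[OF X0 hA1 hA2 hB1 hB2 h0 bv gv, unfolded D0] by simp
      then show ?case using Suc.IH by (simp add: mult_ac)
    qed
    have hB: "B (vv i) = sc (thetaM_s q b lam i) (vv i) + sc (phiM q a b c lam i) (vv (i - 1))" for i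
      using Pall[of i] by (simp add: thetaM_s_TT phiM_PP)
    have p0: "phiM q a b c lam 0 = 0" by (simp add: phiM_def)
    define f where "f = fv sc vv"
    have lf: "Vector_Spaces.linear Msc sc f" unfolding f_def by (rule fv_linear)
    have fA: "f (MA q a lam x) = A (f x)" for x
      unfolding f_def MA_def by (rule fv_MA[where A=A and vv=vv and t="thetaM q a lam", OF lA hA])
    have fB: "f (MB q a b c lam x) = B (f x)" for x
      unfolding f_def MB_def by (rule fv_MB[where B=B and vv=vv and s="thetaM_s q b lam" and p="phiM q a b c lam", OF lB hB p0])
    have gf: "tri_gamma q sc A B C (f x) = sc gM (f x)" for x
      unfolding f_def fv_def lin_sum2[OF lg]
      by (simp add: lin_scale[OF lg] gv scale_sum_right mult.commute)
    have fC: "f (MC q a b c lam x) = C (f x)" for x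
    proof -
      have "f (MC q a b c lam x) = sc (inverse (q + inverse q)) (sc gM (f x) - sc (inverse (q - inverse q))
          (sc q (A (B (f x))) - sc (inverse q) (B (A (f x)))))"
        unfolding MC_def gM_def[symmetric] by (simp add: lin_scale2[OF lf] lin_diff2[OF lf] fA fB)
      moreover have "C (f x) = sc (inverse (q + inverse q)) (sc gM (f x) - sc (inverse (q - inverse q))
          (sc q (A (B (f x))) - sc (inverse q) (B (A (f x)))))"
        by (rule gen_C[OF _ gf ih ihm]) (simp add: tri_gamma_def)
      ultimately show ?thesis by simp
    qed
    have "M_hom q a b c lam sc A B C f" unfolding M_hom_def using lf fA fB fC by blast
    moreover have "f (Poly_Mapping.single 0 1) = v" using fv_single[of vv 0 1] vv0 unfolding f_def by simp
    ultimately show "mu = b * inverse lam \<and> (\<exists>f. M_hom q a b c lam sc A B C f \<and> f (Poly_Mapping.single 0 1) = v)"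
      using mu by blast
  next
    assume "mu = b * inverse lam \<and> (\<exists>f. M_hom q a b c lam sc A B C f \<and> f (Poly_Mapping.single 0 1) = v)"
    then obtain f where mu: "mu = b * inverse lam" and hom: "M_hom q a b c lam sc A B C f"
      and fv0: "f (Poly_Mapping.single 0 1) = v" by blast
    have lf: "Vector_Spaces.linear Msc sc f" and fA: "\<And>x. f (MA q a lam x) = A (f x)"
      and fB: "\<And>x. f (MB q a b c lam x) = B (f x)" and fC: "\<And>x. f (MC q a b c lam x) = C (f x)"
      using hom unfolding M_hom_def by auto
    define u where "u i = f (Poly_Mapping.single i 1)" for i
    have u0: "u 0 = v" using fv0 u_def by simp
    have fs: "f (Poly_Mapping.single i c') = sc c' (u i)" for i c'
      using lin_scale2[OF lf, of c' "Poly_Mapping.single i 1"] by (simp add: Msc_single u_def)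
    have f1: "f 1 = u 0" using u_def by simp
    have uA: "A (u i) = sc (TTf a lam (q^i)) (u i) + u (Suc i)" for i
    proof -
      have "MA q a lam (Poly_Mapping.single i 1) = Poly_Mapping.single i (thetaM q a lam i) + Poly_Mapping.single (Suc i) 1"
        unfolding MA_def by simp
      then show ?thesis using fA[of "Poly_Mapping.single i 1"]
        by (simp add: lin_add2[OF lf] fs thetaM_TT f1)
    qed
    have uB: "B (u i) = sc (TTf b lam (q^i)) (u i) + sc (PPf q a b c lam (q^i)) (u (i - 1))" for i
    proof -
      have "MB q a b c lam (Poly_Mapping.single i 1) = Poly_Mapping.single i (thetaM_s q b lam i)
          + (if i = 0 then 0 else Poly_Mapping.single (i - 1) (phiM q a b c lam i))"
        unfolding MB_def by simp
      then show ?thesis using fB[of "Poly_Mapping.single i 1"]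
        by (cases i) (simp_all add: lin_add2[OF lf] fs thetaM_s_TT phiM_PP PP0 lin_zero2[OF lf] f1)
    qed
    have weq: "we = gM"
    proof -
      have "C v = sc (inverse (q + inverse q)) (sc gM v - sc (inverse (q - inverse q))
          (sc q (A (B v)) - sc (inverse q) (B (A v))))"
        using fC[of "Poly_Mapping.single 0 1"] fv0
        unfolding MC_def gM_def[symmetric] by (simp add: lin_scale2[OF lf] lin_diff2[OF lf] fA fB)
      then have "tri_gamma q sc A B C v = sc gM v"
        unfolding tri_gamma_def using hq by (intro gen_gamma[OF _ _ ihm]) simp_all
      then have "sc we v = sc gM v" using assms(13) by simp
      then show ?thesis using assms(9) by simp
    qed
    have phq: "ph = phF"
    proof -
      have s0: "TTf b lam 1 = mu + inverse mu" unfolding TTf_def mu by (simp add: mult.commute)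
      have s1: "TTf b lam q = mu * q^2 + inverse mu * inverse q ^ 2" unfolding TTf_def mu
        by (simp add: mult.commute power_inverse)
      have BX: "B (A v) = sc (TTf b lam q) (A v) + sc ((q - inverse q) * ph) v"
        using assms(11) s1 by (simp add: algebra_simps)
      have u1: "u 1 = A v - sc (TTf a lam 1) v" using uA[of 0] u0 by simp
      have "B (u 1) = B (A v) - sc (TTf a lam 1) (sc (TTf b lam 1) v)"
        using u1 assms(10) s0 by (simp add: lin_diff[OF lB] lin_scale[OF lB])
      moreover have "B (u 1) = sc (TTf b lam q) (u 1) + sc (PPf q a b c lam q) v"
        using uB[of 1] u0 by simp
      ultimately have "sc (TTf a lam 1 * (TTf b lam q - TTf b lam 1) + (q - inverse q) * ph - PPf q a b c lam q) v = 0"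
        using gen1[OF BX, of "TTf a lam 1" "TTf b lam 1" "PPf q a b c lam q"] u1 by simp
      then have "TTf a lam 1 * (TTf b lam q - TTf b lam 1) + (q - inverse q) * ph - PPf q a b c lam q = 0"
        using assms(9) by simp
      moreover have e2: "PPf q a b c lam q = TTf a lam 1 * (TTf b lam q - TTf b lam 1) + (q - inverse q) * phF"
        using Id0[OF q0 nz] unfolding phF_def .
      ultimately show ?thesis using hq(2) by simp
    qed
    have wsq: "ws = wsF"
    proof -
      have X0: "(1::'a) \<noteq> 0" by simp
      have gu: "tri_gamma q sc A B C (u 0) = sc gM (u 0)" using assms(13) weq u0 by simp
      have bu: "tri_beta q sc A B C (u 0) = sc ws (u 0)" using assms(12) u0 by simp
      have hA1: "A (u 0) = u 1 + sc (TTf a lam 1) (u 0)" using uA[of 0] by (simp add: add.commute)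
      have hA2: "A (u 1) = u 2 + sc (TTf a lam (1*q)) (u 1)" using uA[of 1] by (simp add: add.commute numeral_2_eq_2)
      have hB1: "B (u 0) = sc (TTf b lam 1) (u 0) + sc (PPf q a b c lam 1) v" using uB[of 0] by (simp add: PP0)
      have hB2: "B (u 1) = sc (TTf b lam (1*q)) (u 1) + sc (PPf q a b c lam (1*q)) (u 0)" using uB[of 1] by simp
      have h0: "PPf q a b c lam 1 = 0 \<or> A v = u 0 + sc (TTf a lam (1*inverse q)) v" by (simp add: PP0)
      have B2: "B (u 2) = sc (TTf b lam (1*q*q)) (u 2) + sc (PPf q a b c lam (1*q*q)) (u 1)"
        using uB[of 2] by (simp add: power2_eq_square)
      have v0: "u 0 \<noteq> 0" using u0 assms(9) by simp
      note D = D_zero[OF step_V[OF X0 hA1 hA2 hB1 hB2 h0 bu gu] B2 v0]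
      have k0: "(q^2 - inverse q^2) * (q - inverse q) \<noteq> 0" using hq by simp
      show ?thesis unfolding wsF_def
        by (rule cancel_ws[OF D[unfolded gM_def] Id2[OF q0 nz X0] k0])
    qed
    show "feasible q a b c lam mu ph ws we" using feas_iff mu phq wsq weq by simp
  qed
qed

end
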